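(* As $n\to\infty$, $$\log(n)\sum_{(a,b)\in\mathcal{A}_n}|r_n(a,b)|\longrightarrow 0.$$
   Context: $\mathcal{A}_n=\{(a,b)\in\mathbb{N}^2: a\ge b\ge1,\ a+b\le n+1\}$, $x^{\underline{2}}=x(x-1)$, and $r_n(a,b)=\dfrac{(-1)^{n+a-b}(n+1)(2a-2b+1)(a-1)!(2b-2)!(n-a-b+2)!}{2^{n-a+b-1}\,n!\,(b-1)!\,(n+a-b+2)^{\underline{2}}\,(n-a+b+1)^{\underline{2}}}$. *)

theory Defs
  imports "HOL-Analysis.Analysis"
begin

definition A_set :: "nat \<Rightarrow> (nat \<times> nat) set" where
  "A_set n = {(a, b). a \<ge> b \<and> b \<ge> 1 \<and> a + b \<le> n + 1}"

definition falling2 :: "real \<Rightarrow> real" where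
  "falling2 x = x * (x - 1)"

definition r_coef :: "nat \<Rightarrow> nat \<Rightarrow> nat \<Rightarrow> real" where
  "r_coef n a b =
     ((-1) powi (int n + int a - int b)) * (real n + 1) * (2 * real a - 2 * real b + 1)
       * fact (a - 1) * fact (2 * b - 2) * fact (n + 2 - a - b)
     / (2 powi (int n - int a + int b - 1) * fact n * fact (b - 1)
        * falling2 (real n + real a - real b + 2) * falling2 (real n - real a + real b + 1))"

end

theory Submission
  imports Defs
begin

lemma fact_double_le: "fact (2*m) \<le> (4::real)^m * fact m * fact m"
proof (induction m)
  case 0 then show ?case by simp
next
  case (Suc m)
  have "fact (2*Suc m) = (2*real m+2)*(2*real m+1) * (fact (2*m)::real)"
    by (simp add: algebra_simps)
  also have "\<dots> \<le> (2*real m+2)*(2*real m+1) * ((4::real)^m * fact m * fact m)"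
    by (rule mult_left_mono[OF Suc]) simp
  also have "\<dots> \<le> 4*(real m+1)*(real m+1) * ((4::real)^m * fact m * fact m)"
    by (rule mult_right_mono) (auto simp: algebra_simps)
  also have "\<dots> = (4::real)^Suc m * fact (Suc m) * fact (Suc m)"
    by (simp add: algebra_simps)
  finally show ?case .
qed

lemma term_bound:
  assumes "b \<ge> 1" "a \<ge> b" "a + b \<le> n + 1"
  shows "\<bar>r_coef n a b\<bar> \<le> 2 * (1/2)^(n+1-a-b) * (fact (a-1) * fact (b-1) * fact (n+2-a-b) / fact n)"
proof -
  obtain m where bm: "b = Suc m" using assms(1) by (cases b) auto
  obtain d where ad: "a = b + d" using assms(2) le_Suc_ex by blast
  obtain k where nk: "n + 1 = a + b + k" using assms(3) le_Suc_ex by blast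
  have n: "n = 2*m+d+k+1" using nk ad bm by simp
  have e1: "int n + int a - int b = int (n+d)" using ad by simp
  have e2: "int n - int a + int b - 1 = int (2*m+k)" using n ad bm by simp
  have e3: "real n + real a - real b + 2 = real n + real d + 2" using ad by simp
  have e4: "real n - real a + real b + 1 = 2*real m + real k + 2" using ad bm n by simp
  have e5: "2 * real a - 2 * real b + 1 = 2 * real d + 1" using ad by simp
  have ia: "a - 1 = m + d" "b - 1 = m" "n + 2 - a - b = k + 1" "n+1-a-b = k"
    using ad bm n by auto
  define N where "N = (real n + 1) * (2 * real d + 1)"
  define D where "D = (real n + real d + 2) * (real n + real d + 1) * ((2*real m + real k + 2) * (2*real m + real k + 1))"
  have Dpos: "D > 0" unfolding D_def by (intro mult_pos_pos) auto
  have ND: "N \<le> 2 * D"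
  proof -
    have NP: "N \<le> (real n + real d + 2) * (real n + real d + 1)"
      unfolding N_def using n by (intro mult_mono) auto
    have "(2*real m + real k + 2) * (2*real m + real k + 1) \<ge> 2"
    proof -
      have "(2*real m + real k + 2) * (2*real m + real k + 1) \<ge> 2 * 1"
        by (intro mult_mono) auto
      thus ?thesis by simp
    qed
    then have "(real n + real d + 2) * (real n + real d + 1) * 2 \<le> D"
      unfolding D_def by (intro mult_left_mono) auto
    with NP Dpos show ?thesis by linarith
  qed
  define F where "F = fact (m+d) * fact (2*m) * (fact (k+1)::real)"
  define G where "G = 2^(2*m+k) * fact n * (fact m::real)"
  have f1: "falling2 (real n + real d + 2) = (real n + real d + 2) * (real n + real d + 1)"
    unfolding falling2_def by simp
  have f2: "falling2 (2*real m + real k + 2) = (2*real m + real k + 2) * (2*real m + real k + 1)"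
    unfolding falling2_def by simp
  have bb: "2 * b - 2 = 2 * m" using bm by simp
  have r: "r_coef n a b = ((-1)^(n+d) * N * F) / (G * D)"
    unfolding r_coef_def e1 e2 e3 e4 e5 f1 f2 power_int_of_nat ia bb N_def D_def F_def G_def
    by (simp only: mult_ac)
  have four: "(4::real)^m = (2^m)^2" by (simp add: power2_eq_square power_mult_distrib[symmetric])
  have Gpos: "G > 0" unfolding G_def by simp
  have Fpos: "F \<ge> 0" unfolding F_def by simp
  have Npos: "N \<ge> 0" unfolding N_def by simp
  have "\<bar>r_coef n a b\<bar> = (N / D) * (F / G)"
    unfolding r using Dpos Gpos Fpos Npos by (simp add: abs_mult)
  also have "\<dots> \<le> 2 * (F / G)"
    by (rule mult_right_mono) (use ND Dpos Gpos Fpos in \<open>auto simp: divide_simps\<close>)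
  also have "\<dots> \<le> 2 * (fact (m+d) * ((4::real)^m * fact m * fact m) * fact (k+1) / G)"
    unfolding F_def using Gpos
    by (intro mult_left_mono divide_right_mono mult_right_mono fact_double_le) auto
  also have "\<dots> = 2 * (1/2)^k * (fact (m+d) * fact m * fact (k+1) / fact n)"
    unfolding G_def using four by (simp add: power_add power_mult field_simps)
  finally show ?thesis using ia by simp
qed

lemma fact_mult_le_aux: "1 \<le> x \<Longrightarrow> fact x * fact (Suc z) \<le> (fact (x+z) :: real)"
proof (induction z)
  case 0 then show ?case by simp
next
  case (Suc z)
  have "fact x * fact (Suc (Suc z)) = (fact x * fact (Suc z)) * (real z + 2)" by (simp add: algebra_simps)
  also have "\<dots> \<le> fact (x+z) * (real x + real z + 1)"
    by (rule mult_mono) (use Suc in auto)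
  also have "\<dots> = fact (x + Suc z)"
    by (simp add: algebra_simps)
  finally show ?case .
qed

lemma fact_mult_le: "1 \<le> x \<Longrightarrow> 1 \<le> y \<Longrightarrow> fact x * fact y \<le> (fact (x+y-1) :: real)"
  using fact_mult_le_aux[of x "y-1"] by simp

lemma fb2:
  assumes "b \<ge> 2" "a \<ge> b" "a + b \<le> n + 1"
  shows "fact (a-1) * fact (b-1) * fact (n+2-a-b) / fact n \<le> (1::real) / (real n * (real n - 1))"
proof -
  have n2: "n \<ge> 2" using assms by simp
  have "fact (b-1) * fact (n+2-a-b) \<le> (fact (n-a) :: real)"
    using fact_mult_le[of "b-1" "n+2-a-b"] assms by simp
  hence "fact (a-1) * fact (b-1) * fact (n+2-a-b) \<le> fact (a-1) * (fact (n-a) :: real)"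
    by (simp add: mult.assoc mult_left_mono)
  also have "\<dots> \<le> fact (n - 2)"
    using fact_mult_le[of "a-1" "n-a"] assms by (simp add: numeral_2_eq_2)
  finally have 1: "fact (a-1) * fact (b-1) * fact (n+2-a-b) \<le> (fact (n-2) :: real)" .
  have 2: "(fact n :: real) = real n * (real n - 1) * fact (n-2)"
  proof -
    obtain q where q: "n = q + 2" using n2 le_Suc_ex by (metis add.commute)
    show ?thesis unfolding q by (simp add: algebra_simps)
  qed
  have pos: "real n * (real n - 1) > 0" using n2 by simp
  have Fp: "(fact (n-2)::real) > 0" by simp
  have "fact (a-1) * fact (b-1) * fact (n+2-a-b) / fact n \<le> fact (n-2) / (real n * (real n - 1) * fact (n-2))"
    unfolding 2 by (rule divide_right_mono[OF 1]) (use pos in simp)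
  also have "\<dots> = 1 / (real n * (real n - 1))" using Fp pos by simp
  finally show ?thesis .
qed

lemma fb1:
  assumes "a \<ge> 2" "a \<le> n"
  shows "fact (a-1) * fact (1-1) * fact (n+2-a-1) / fact n \<le> (1::real) / real n"
proof -
  have "fact (a-1) * fact (n+1-a) \<le> (fact (n-1) :: real)"
    using fact_mult_le[of "a-1" "n+1-a"] assms by simp
  moreover have "(fact n :: real) = real n * fact (n-1)"
  proof -
    obtain q where q: "n = Suc q" using assms by (cases n) auto
    show ?thesis unfolding q by simp
  qed
  moreover have "n > 0" using assms by simp
  ultimately have 1: "fact (a-1) * fact (1-1) * fact (n+2-a-1) \<le> (fact (n-1) :: real)"
    and 2: "(fact n :: real) = real n * fact (n-1)" and pos: "real n > 0"
    by (simp_all add: numeral_2_eq_2)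
  have Fp: "(fact (n-1)::real) > 0" by simp
  have "fact (a-1) * fact (1-1) * fact (n+2-a-1) / fact n \<le> fact (n-1) / (real n * fact (n-1))"
    unfolding 2 by (rule divide_right_mono[OF 1]) (use pos in simp)
  also have "\<dots> = 1 / real n" using Fp pos by simp
  finally show ?thesis .
qed

lemma geom_sum: "(\<Sum>a\<le>N. (1/2::real)^(N-a)) = 2 - (1/2)^N"
proof (induction N)
  case 0 then show ?case by simp
next
  case (Suc N)
  have "(\<Sum>a\<le>Suc N. (1/2::real)^(Suc N-a)) = (\<Sum>a\<le>N. (1/2::real)^(Suc N-a)) + 1" by simp
  also have "(\<Sum>a\<le>N. (1/2::real)^(Suc N-a)) = (1/2) * (\<Sum>a\<le>N. (1/2::real)^(N-a))"
    unfolding sum_distrib_left by (intro sum.cong) (auto simp: Suc_diff_le)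
  finally show ?case using Suc by simp
qed

lemma geom_le: "S \<subseteq> {..N} \<Longrightarrow> (\<Sum>a\<in>S. (1/2::real)^(N-a)) \<le> 2"
proof -
  assume S: "S \<subseteq> {..N}"
  have "(\<Sum>a\<in>S. (1/2::real)^(N-a)) \<le> (\<Sum>a\<le>N. (1/2::real)^(N-a))"
    by (rule sum_mono2) (use S in auto)
  also have "\<dots> \<le> 2" unfolding geom_sum by simp
  finally show ?thesis .
qed

lemma sum_A_eq:
  "(\<Sum>(a, b)\<in>A_set n. f a b) = (\<Sum>b\<in>{1..n}. \<Sum>a\<in>{b..n+1-b}. f a b)"
proof -
  have "(\<Sum>(a, b)\<in>A_set n. f a b) = (\<Sum>(b,a)\<in>(SIGMA b:{1..n}. {b..n+1-b}). f a b)"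
    by (rule sum.reindex_bij_witness[where i="\<lambda>(b,a). (a,b)" and j="\<lambda>(a,b). (b,a)"])
       (auto simp: A_set_def)
  also have "\<dots> = (\<Sum>b\<in>{1..n}. \<Sum>a\<in>{b..n+1-b}. f a b)"
    by (rule sum.Sigma[symmetric]) auto
  finally show ?thesis .
qed

lemma row1:
  assumes "n \<ge> 2"
  shows "(\<Sum>a\<in>{1..n}. \<bar>r_coef n a 1\<bar>) \<le> 8 / real n"
proof -
  have npos: "real n > 0" using assms by simp
  have "{1..n} = insert 1 {2..n}" using assms by auto
  hence "(\<Sum>a\<in>{1..n}. \<bar>r_coef n a 1\<bar>) = \<bar>r_coef n 1 1\<bar> + (\<Sum>a\<in>{2..n}. \<bar>r_coef n a 1\<bar>)"
    by simp
  also have "\<bar>r_coef n 1 1\<bar> \<le> 4 / real n"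
  proof -
    have "\<bar>r_coef n 1 1\<bar> \<le> 2 * (1/2)^(n+1-1-1) * (fact (1-1) * fact (1-1) * fact (n+2-1-1) / fact n)"
      using term_bound[of 1 1 n] assms by simp
    also have "\<dots> = 4 / 2^n"
    proof -
      obtain q where q: "n = Suc q" using assms by (cases n) auto
      show ?thesis unfolding q by (simp add: power_divide)
    qed
    also have "\<dots> \<le> 4 / real n"
    proof -
      have "real n \<le> 2^n" using less_exp[of n] by (metis less_imp_le of_nat_le_iff of_nat_numeral of_nat_power)
      thus ?thesis using npos by (intro divide_left_mono) auto
    qed
    finally show ?thesis .
  qed
  also have "(\<Sum>a\<in>{2..n}. \<bar>r_coef n a 1\<bar>) \<le> (\<Sum>a\<in>{2..n}. (2 / real n) * (1/2)^(n-a))"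
  proof (rule sum_mono)
    fix a assume a: "a \<in> {2..n}"
    have "\<bar>r_coef n a 1\<bar> \<le> 2 * (1/2)^(n+1-a-1) * (fact (a-1) * fact (1-1) * fact (n+2-a-1) / fact n)"
      using term_bound[of 1 a n] a by simp
    also have "\<dots> \<le> 2 * (1/2)^(n+1-a-1) * (1 / real n)"
      by (rule mult_left_mono[OF fb1]) (use a in auto)
    finally show "\<bar>r_coef n a 1\<bar> \<le> (2 / real n) * (1/2)^(n-a)" by simp
  qed
  also have "\<dots> = (2 / real n) * (\<Sum>a\<in>{2..n}. (1/2::real)^(n-a))"
    by (simp add: sum_distrib_left)
  also have "\<dots> \<le> (2 / real n) * 2"
    by (rule mult_left_mono[OF geom_le]) (use npos in auto)
  finally show ?thesis by simp
qed

lemma rowb: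
  assumes "2 \<le> b" "b \<le> n"
  shows "(\<Sum>a\<in>{b..n+1-b}. \<bar>r_coef n a b\<bar>) \<le> 4 / (real n * (real n - 1))"
proof -
  have pos: "real n * (real n - 1) > 0" using assms by simp
  have "(\<Sum>a\<in>{b..n+1-b}. \<bar>r_coef n a b\<bar>) \<le> (\<Sum>a\<in>{b..n+1-b}. (2 / (real n * (real n - 1))) * (1/2)^((n+1-b)-a))"
  proof (rule sum_mono)
    fix a assume a: "a \<in> {b..n+1-b}"
    have "\<bar>r_coef n a b\<bar> \<le> 2 * (1/2)^(n+1-a-b) * (fact (a-1) * fact (b-1) * fact (n+2-a-b) / fact n)"
      by (rule term_bound) (use a assms in auto)
    also have "\<dots> \<le> 2 * (1/2)^(n+1-a-b) * (1 / (real n * (real n - 1)))"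
      by (rule mult_left_mono[OF fb2]) (use a assms in auto)
    also have "n+1-a-b = (n+1-b)-a" by simp
    finally show "\<bar>r_coef n a b\<bar> \<le> (2 / (real n * (real n - 1))) * (1/2)^((n+1-b)-a)" by simp
  qed
  also have "\<dots> = (2 / (real n * (real n - 1))) * (\<Sum>a\<in>{b..n+1-b}. (1/2::real)^((n+1-b)-a))"
    by (simp add: sum_distrib_left)
  also have "\<dots> \<le> (2 / (real n * (real n - 1))) * 2"
    by (rule mult_left_mono[OF geom_le]) (use pos in auto)
  finally show ?thesis by simp
qed

lemma total_bound:
  assumes "n \<ge> 2"
  shows "(\<Sum>(a, b)\<in>A_set n. \<bar>r_coef n a b\<bar>) \<le> 12 / real n"
proof -
  have "{1..n} = insert 1 {2..n}" using assms by auto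
  hence "(\<Sum>(a, b)\<in>A_set n. \<bar>r_coef n a b\<bar>) = (\<Sum>a\<in>{1..n}. \<bar>r_coef n a 1\<bar>) + (\<Sum>b\<in>{2..n}. \<Sum>a\<in>{b..n+1-b}. \<bar>r_coef n a b\<bar>)"
    unfolding sum_A_eq by simp
  also have "\<dots> \<le> 8 / real n + (\<Sum>b\<in>{2..n}. 4 / (real n * (real n - 1)))"
    by (intro add_mono row1 sum_mono rowb) (use assms in auto)
  also have "(\<Sum>b\<in>{2..n}. 4 / (real n * (real n - 1))) = 4 / real n"
  proof -
    have "real (card {2..n}) = real n - 1" using assms by simp
    moreover have "real n - 1 > 0" using assms by simp
    ultimately show ?thesis by (simp add: field_simps)
  qed
  finally show ?thesis by simp
qed

theorem mainTheorem18:
  shows "(\<lambda>n. ln (real n) * (\<Sum>(a, b)\<in>A_set n. \<bar>r_coef n a b\<bar>)) \<longlonglongrightarrow> 0"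
proof (rule tendsto_sandwich[where f="\<lambda>_. 0" and h="\<lambda>n. 12 * (ln (real n) / real n)"])
  show "\<forall>\<^sub>F n in sequentially. 0 \<le> ln (real n) * (\<Sum>(a, b)\<in>A_set n. \<bar>r_coef n a b\<bar>)"
    by (rule eventually_sequentiallyI[of 1]) (auto intro!: mult_nonneg_nonneg sum_nonneg)
  show "\<forall>\<^sub>F n in sequentially. ln (real n) * (\<Sum>(a, b)\<in>A_set n. \<bar>r_coef n a b\<bar>) \<le> 12 * (ln (real n) / real n)"
  proof (rule eventually_sequentiallyI[of 2])
    fix n :: nat assume n: "n \<ge> 2"
    have "ln (real n) * (\<Sum>(a, b)\<in>A_set n. \<bar>r_coef n a b\<bar>) \<le> ln (real n) * (12 / real n)"
      by (rule mult_left_mono[OF total_bound[OF n]]) (use n in simp)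
    thus "ln (real n) * (\<Sum>(a, b)\<in>A_set n. \<bar>r_coef n a b\<bar>) \<le> 12 * (ln (real n) / real n)" by (simp add: mult.commute)
  qed
  show "(\<lambda>_. 0::real) \<longlonglongrightarrow> 0" by simp
  show "(\<lambda>n. 12 * (ln (real n) / real n)) \<longlonglongrightarrow> 0"
    using tendsto_mult[OF tendsto_const lim_ln_over_n, of 12] by simp
qed

end
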